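(* For all integers $k\ge0$, $$G_{(k+2)_{ab}}(q;a,b)=(1+aq)(1+bq)\,G_{k_b}(q;aq,bq),$$ and consequently $\lim_{k\to\infty}G_{k_b}(q;a,b)=(-aq;q)_\infty(-bq;q)_\infty$.
   Context: Notation: $(x;q)_\infty=\prod_{n\ge0}(1-xq^n)$. Coloured integers are $k_{ab},k_a,k_b$ for integers $k\ge1$, ordered $1_{ab}<1_a<1_b<2_{ab}<2_a<2_b<\cdots$; colours are ordered $ab<a<b$. An admissible partition is a finite (possibly empty) sequence $\lambda_1,\dots,\lambda_s$ of coloured integers, with no part $1_{ab}$, such that for $1\le i<s$, (integer of $\lambda_i$)$-$(integer of $\lambda_{i+1}$) $\ge2$ if the colour of $\lambda_i$ is $ab$ or the colour of $\lambda_i$ is smaller than the colour of $\lambda_{i+1}$, and $\ge1$ otherwise. Its weight is $a^{u}b^{v}q^{n}$ where $n$ is the sum of the integers, $u$ the number of parts of colour $a$ or $ab$, $v$ the number of parts of colour $b$ or $ab$. For a coloured integer $\kappa$ with $k\ge1$, $G_\kappa(q;a,b)$ is the sum of weights of admissible partitions with largest part $\le\kappa$; by convention $G_{0_b}(q;a,b)=1$. $G_{k_b}(q;aq,bq)$ denotes $G_{k_b}$ with $a,b$ replaced by $aq,bq$. *)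

theory Defs
  imports "HOL-Analysis.Analysis"
begin

text \<open>Colours ab < a < b.\<close>
datatype colour = AB | CA | CB

fun colour_rank :: "colour \<Rightarrow> nat" where
  "colour_rank AB = 0" | "colour_rank CA = 1" | "colour_rank CB = 2"

type_synonym cint = "nat \<times> colour"

definition cint_le :: "cint \<Rightarrow> cint \<Rightarrow> bool" where
  "cint_le x y \<longleftrightarrow> fst x < fst y \<or> (fst x = fst y \<and> colour_rank (snd x) \<le> colour_rank (snd y))"

definition diff_ok :: "cint \<Rightarrow> cint \<Rightarrow> bool" where
  "diff_ok x y \<longleftrightarrow>
     (if snd x = AB \<or> colour_rank (snd x) < colour_rank (snd y)
      then int (fst x) - int (fst y) \<ge> 2
      else int (fst x) - int (fst y) \<ge> 1)"

definition admissible :: "cint list \<Rightarrow> bool" where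
  "admissible xs \<longleftrightarrow>
     (\<forall>p\<in>set xs. fst p \<ge> 1) \<and> (1, AB) \<notin> set xs \<and>
     (\<forall>i. Suc i < length xs \<longrightarrow> diff_ok (xs ! i) (xs ! Suc i))"

definition weight :: "cint list \<Rightarrow> 'r::comm_ring_1 \<Rightarrow> 'r \<Rightarrow> 'r \<Rightarrow> 'r" where
  "weight xs q a b =
     a ^ length (filter (\<lambda>p. snd p = CA \<or> snd p = AB) xs) *
     b ^ length (filter (\<lambda>p. snd p = CB \<or> snd p = AB) xs) *
     q ^ sum_list (map fst xs)"

definition G :: "cint \<Rightarrow> 'r::comm_ring_1 \<Rightarrow> 'r \<Rightarrow> 'r \<Rightarrow> 'r" where
  "G kappa q a b = (\<Sum>xs\<in>{xs. admissible xs \<and> (\<forall>p\<in>set xs. cint_le p kappa)}. weight xs q a b)"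

definition qpoch_inf :: "complex \<Rightarrow> complex \<Rightarrow> complex" where
  "qpoch_inf x q = (\<Prod>n. (1 - x * q ^ n))"

end

theory Submission
  imports Defs
begin

definition S :: "cint \<Rightarrow> cint list set" where
  "S \<kappa> = {xs. admissible xs \<and> (\<forall>p\<in>set xs. cint_le p \<kappa>)}"

lemma all_Suc_split:
  "(\<forall>i. Suc i < Suc n \<longrightarrow> P i) \<longleftrightarrow> (0 < n \<longrightarrow> P 0) \<and> (\<forall>j. Suc j < n \<longrightarrow> P (Suc j))"
  apply auto
  subgoal for i by (cases i) auto
  done

lemma adm_Nil[simp]: "admissible []"
  by (simp add: admissible_def)

lemma adm_Cons:
  "admissible (x#ys) \<longleftrightarrow> fst x \<ge> 1 \<and> x \<noteq> (1,AB) \<and> admissible ys \<and> (ys = [] \<or> diff_ok x (hd ys))"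
proof -
  have "(\<forall>i. Suc i < length (x#ys) \<longrightarrow> diff_ok ((x#ys) ! i) ((x#ys) ! Suc i)) \<longleftrightarrow>
        (ys \<noteq> [] \<longrightarrow> diff_ok x (hd ys)) \<and> (\<forall>j. Suc j < length ys \<longrightarrow> diff_ok (ys ! j) (ys ! Suc j))"
    by (simp only: length_Cons all_Suc_split) (auto simp: hd_conv_nth nth_Cons_Suc)
  then show ?thesis unfolding admissible_def by auto
qed

lemma diff_ok_lt: "diff_ok x y \<Longrightarrow> fst y < fst x"
  unfolding diff_ok_def by (auto split: if_splits)

lemma adm_dec: "admissible (x#ys) \<Longrightarrow> p \<in> set ys \<Longrightarrow> fst p < fst x"
proof (induction ys arbitrary: x)
  case Nil then show ?case by simp
next
  case (Cons y zs)
  have d: "diff_ok x y" and ay: "admissible (y#zs)" using Cons.prems(1) by (auto simp: adm_Cons)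
  have "fst y < fst x" using diff_ok_lt[OF d] .
  then show ?case using Cons.prems(2) Cons.IH[OF ay] by auto
qed

lemma adm_le_all: "admissible (y#zs) \<Longrightarrow> cint_le y \<beta> \<Longrightarrow> p \<in> set (y#zs) \<Longrightarrow> cint_le p \<beta>"
  using adm_dec[of y zs p] unfolding cint_le_def by auto

definition wc :: "cint \<Rightarrow> 'r::comm_ring_1 \<Rightarrow> 'r \<Rightarrow> 'r \<Rightarrow> 'r" where
  "wc x q a b = (case snd x of AB \<Rightarrow> a*b | CA \<Rightarrow> a | CB \<Rightarrow> b) * q ^ fst x"

lemma weight_Nil[simp]: "weight [] q a b = 1"
  by (simp add: weight_def)

lemma weight_Cons: "weight (x#ys) q a b = wc x q a b * weight ys q a b"
  by (cases x; cases "snd x") (auto simp: weight_def wc_def algebra_simps power_add)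

lemma S_mem: "xs \<in> S \<kappa> \<longleftrightarrow> admissible xs \<and> (\<forall>p\<in>set xs. cint_le p \<kappa>)"
  by (simp add: S_def)

lemma S_split:
  assumes k1: "fst \<kappa> \<ge> 1" and nab: "\<kappa> \<noteq> (1,AB)"
    and hpred: "\<And>p. (cint_le p \<kappa> \<and> p \<noteq> \<kappa>) \<longleftrightarrow> cint_le p \<pi>"
    and hallow: "\<And>y. diff_ok \<kappa> y \<longleftrightarrow> cint_le y \<alpha>"
  shows "S \<kappa> = S \<pi> \<union> Cons \<kappa> ` S \<alpha>" and "S \<pi> \<inter> Cons \<kappa> ` S \<alpha> = {}"
proof -
  have refl: "cint_le \<kappa> \<kappa>" by (simp add: cint_le_def)
  have pk: "cint_le p \<kappa>" if "cint_le p \<pi>" for p using hpred[of p] that by blast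
  have ak: "cint_le y \<kappa>" if "cint_le y \<alpha>" for y
  proof -
    have "diff_ok \<kappa> y" using hallow[of y] that by blast
    then have "fst y < fst \<kappa>" by (rule diff_ok_lt)
    then show ?thesis by (simp add: cint_le_def)
  qed
  show "S \<kappa> = S \<pi> \<union> Cons \<kappa> ` S \<alpha>"
  proof (intro equalityI subsetI)
    fix xs assume xs: "xs \<in> S \<kappa>"
    show "xs \<in> S \<pi> \<union> Cons \<kappa> ` S \<alpha>"
    proof (cases xs)
      case Nil then show ?thesis by (simp add: S_mem)
    next
      case (Cons x ys)
      have ax: "admissible (x#ys)" and le: "\<forall>p\<in>set (x#ys). cint_le p \<kappa>"
        using xs unfolding Cons S_mem by blast+
      show ?thesis
      proof (cases "x = \<kappa>")
        case True
        have ays: "admissible ys" and h: "ys = [] \<or> diff_ok \<kappa> (hd ys)"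
          using ax unfolding True adm_Cons by blast+
        have "ys \<in> S \<alpha>"
        proof (cases ys)
          case Nil then show ?thesis by (simp add: S_mem)
        next
          case (Cons y zs)
          then have "diff_ok \<kappa> y" using h by simp
          then have "cint_le y \<alpha>" using hallow[of y] by blast
          then have "\<forall>p\<in>set (y#zs). cint_le p \<alpha>" using ays Cons adm_le_all[of y zs \<alpha>] by blast
          then show ?thesis using ays Cons unfolding S_mem by blast
        qed
        then have "\<kappa> # ys \<in> Cons \<kappa> ` S \<alpha>" by (rule imageI)
        then show ?thesis unfolding Cons True by (rule UnI2)
      next
        case False
        have "cint_le x \<kappa>" using le by simp
        then have "cint_le x \<pi>" using False hpred[of x] by blast
        then have "\<forall>p\<in>set (x#ys). cint_le p \<pi>" using adm_le_all[OF ax] by blast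
        then have "x#ys \<in> S \<pi>" using ax unfolding S_mem by blast
        then show ?thesis unfolding Cons by (rule UnI1)
      qed
    qed
  next
    fix xs assume "xs \<in> S \<pi> \<union> Cons \<kappa> ` S \<alpha>"
    then consider "xs \<in> S \<pi>" | ys where "xs = \<kappa> # ys" "ys \<in> S \<alpha>" by blast
    then show "xs \<in> S \<kappa>"
    proof cases
      case 1 then show ?thesis using pk unfolding S_mem by blast
    next
      case 2
      have ays: "admissible ys" and yl: "\<forall>p\<in>set ys. cint_le p \<alpha>" using 2(2) unfolding S_mem by blast+
      have "ys = [] \<or> diff_ok \<kappa> (hd ys)"
      proof (cases ys)
        case (Cons y zs)
        then have "cint_le y \<alpha>" using yl by simp
        then show ?thesis using hallow[of y] Cons by simp
      qed simp
      then have "admissible (\<kappa>#ys)" using ays k1 nab by (simp add: adm_Cons)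
      moreover have "\<forall>p\<in>set (\<kappa>#ys). cint_le p \<kappa>" using yl ak refl by simp
      ultimately show ?thesis unfolding 2(1) S_mem by blast
    qed
  qed
  show "S \<pi> \<inter> Cons \<kappa> ` S \<alpha> = {}"
  proof (rule ccontr)
    assume "S \<pi> \<inter> Cons \<kappa> ` S \<alpha> \<noteq> {}"
    then obtain ys where "\<kappa> # ys \<in> S \<pi>" by blast
    then have "cint_le \<kappa> \<pi>" unfolding S_mem by simp
    then show False using hpred[of \<kappa>] by blast
  qed
qed

lemma G_S: "G \<kappa> q a b = (\<Sum>xs\<in>S \<kappa>. weight xs q a b)"
  by (simp add: G_def S_def)

lemma S_zero: "S (0, c) = {[]}"
proof -
  have "xs = []" if "xs \<in> S (0,c)" for xs
  proof (cases xs)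
    case (Cons x ys)
    then show ?thesis using that by (auto simp: S_def admissible_def cint_le_def)
  qed
  then show ?thesis by (auto simp: S_def)
qed

lemma S_one_ab: "S (1, AB) = {[]}"
proof -
  have "xs = []" if "xs \<in> S (1,AB)" for xs
  proof (cases xs)
    case (Cons x ys)
    then have "fst x \<ge> 1" "x \<noteq> (1,AB)" "cint_le x (1,AB)" using that by (auto simp: S_def adm_Cons)
    then show ?thesis by (cases x; cases "snd x") (auto simp: cint_le_def)
  qed
  then show ?thesis by (auto simp: S_def)
qed

lemma S_one_ab': "S (Suc 0, AB) = {[]}"
  using S_one_ab by simp

lemma split_CB: "S (Suc n, CB) = S (Suc n, CA) \<union> Cons (Suc n, CB) ` S (n, CB)"
  "S (Suc n, CA) \<inter> Cons (Suc n, CB) ` S (n, CB) = {}"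
proof -
  have h1: "(cint_le p (Suc n, CB) \<and> p \<noteq> (Suc n, CB)) \<longleftrightarrow> cint_le p (Suc n, CA)" for p
    by (cases p; cases "snd p") (auto simp: cint_le_def)
  have h2: "diff_ok (Suc n, CB) y \<longleftrightarrow> cint_le y (n, CB)" for y
    by (cases y; cases "snd y") (auto simp: cint_le_def diff_ok_def)
  show "S (Suc n, CB) = S (Suc n, CA) \<union> Cons (Suc n, CB) ` S (n, CB)"
       "S (Suc n, CA) \<inter> Cons (Suc n, CB) ` S (n, CB) = {}"
    using S_split[of "(Suc n, CB)", OF _ _ h1 h2] by auto
qed

lemma split_CA: "S (Suc n, CA) = S (Suc n, AB) \<union> Cons (Suc n, CA) ` S (n, CA)"
  "S (Suc n, AB) \<inter> Cons (Suc n, CA) ` S (n, CA) = {}"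
proof -
  have h1: "(cint_le p (Suc n, CA) \<and> p \<noteq> (Suc n, CA)) \<longleftrightarrow> cint_le p (Suc n, AB)" for p
    by (cases p; cases "snd p") (auto simp: cint_le_def)
  have h2: "diff_ok (Suc n, CA) y \<longleftrightarrow> cint_le y (n, CA)" for y
    by (cases y; cases "snd y") (auto simp: cint_le_def diff_ok_def)
  show "S (Suc n, CA) = S (Suc n, AB) \<union> Cons (Suc n, CA) ` S (n, CA)"
       "S (Suc n, AB) \<inter> Cons (Suc n, CA) ` S (n, CA) = {}"
    using S_split[of "(Suc n, CA)", OF _ _ h1 h2] by auto
qed

lemma split_AB: "S (Suc (Suc n), AB) = S (Suc n, CB) \<union> Cons (Suc (Suc n), AB) ` S (n, CB)"
  "S (Suc n, CB) \<inter> Cons (Suc (Suc n), AB) ` S (n, CB) = {}"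
proof -
  have h1: "(cint_le p (Suc (Suc n), AB) \<and> p \<noteq> (Suc (Suc n), AB)) \<longleftrightarrow> cint_le p (Suc n, CB)" for p
    by (cases p; cases "snd p") (auto simp: cint_le_def)
  have h2: "diff_ok (Suc (Suc n), AB) y \<longleftrightarrow> cint_le y (n, CB)" for y
    by (cases y; cases "snd y") (auto simp: cint_le_def diff_ok_def)
  show "S (Suc (Suc n), AB) = S (Suc n, CB) \<union> Cons (Suc (Suc n), AB) ` S (n, CB)"
       "S (Suc n, CB) \<inter> Cons (Suc (Suc n), AB) ` S (n, CB) = {}"
    using S_split[of "(Suc (Suc n), AB)", OF _ _ h1 h2] by auto
qed

lemma finite_S: "finite (S (k, c))"
proof (induction k arbitrary: c rule: less_induct)
  case (less k)
  show ?case
  proof (cases k)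
    case 0 then show ?thesis by (simp add: S_zero)
  next
    case (Suc n)
    have fab: "finite (S (Suc n, AB))"
    proof (cases n)
      case 0 then show ?thesis by (simp add: S_one_ab')
    next
      case (Suc m)
      then show ?thesis using split_AB(1)[of m] less Suc \<open>k = Suc n\<close> by auto
    qed
    have fca: "finite (S (Suc n, CA))" using split_CA(1)[of n] fab less Suc by auto
    have fcb: "finite (S (Suc n, CB))" using split_CB(1)[of n] fca less Suc by auto
    show ?thesis using fab fca fcb Suc by (cases c) auto
  qed
qed

lemma G_split:
  assumes "S \<kappa> = S \<pi> \<union> Cons \<kappa> ` S \<alpha>" "S \<pi> \<inter> Cons \<kappa> ` S \<alpha> = {}"
    and "finite (S \<pi>)" "finite (S \<alpha>)"
  shows "G \<kappa> q a b = G \<pi> q a b + wc \<kappa> q a b * G \<alpha> q a b"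
proof -
  have "G \<kappa> q a b = (\<Sum>xs\<in>S \<pi>. weight xs q a b) + (\<Sum>xs\<in>Cons \<kappa> ` S \<alpha>. weight xs q a b)"
    unfolding G_S assms(1) by (rule sum.union_disjoint) (use assms in auto)
  also have "(\<Sum>xs\<in>Cons \<kappa> ` S \<alpha>. weight xs q a b) = (\<Sum>ys\<in>S \<alpha>. weight (\<kappa>#ys) q a b)"
    by (rule sum.reindex_cong[where l="Cons \<kappa>"]) auto
  also have "\<dots> = wc \<kappa> q a b * G \<alpha> q a b"
    by (simp add: G_S weight_Cons sum_distrib_left)
  finally show ?thesis by (simp add: G_S)
qed

lemma G_zero: "G (0, c) q a b = 1"
  by (simp add: G_S S_zero)

lemma G_one_ab: "G (Suc 0, AB) q a b = 1"
  by (simp add: G_S S_one_ab')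

lemma G_CB: "G (Suc n, CB) q a b = G (Suc n, CA) q a b + b * q ^ Suc n * G (n, CB) q a b"
  using G_split[OF split_CB finite_S finite_S] by (simp add: wc_def)

lemma G_CA: "G (Suc n, CA) q a b = G (Suc n, AB) q a b + a * q ^ Suc n * G (n, CA) q a b"
  using G_split[OF split_CA finite_S finite_S] by (simp add: wc_def)

lemma G_AB: "G (Suc (Suc n), AB) q a b = G (Suc n, CB) q a b + a * b * q ^ Suc (Suc n) * G (n, CB) q a b"
  using G_split[OF split_AB finite_S finite_S] by (simp add: wc_def)

lemma alg_step:
  fixes a b q Q P d0 d1 d2 d3 f0 f1 f2 :: complex
  assumes r1: "d3 = (1+(a+b)*(q^3*Q))*d2 + a*b*(q^3*Q)*(1-q^2*Q)*d1"
  and r0: "d2 = (1+(a+b)*(q^2*Q))*d1 + a*b*(q^2*Q)*(1-q*Q)*d0"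
  and e1: "d1 + a*b*(q^2*Q)*d0 = P*f0"
  and e2: "d2 + a*b*(q^3*Q)*d1 = P*f1"
  and rs: "f2 = (1+(a*q+b*q)*(q^2*Q))*f1 + (a*q)*(b*q)*(q^2*Q)*(1-q*Q)*f0"
  shows "d3 + a*b*(q^4*Q)*d2 = P*f2"
proof -
  have "d3 + a*b*(q^4*Q)*d2 = (1+(a+b)*(q^3*Q))*(d2 + a*b*(q^3*Q)*d1) + a*b*(q^4*Q)*(1-q*Q)*(d1 + a*b*(q^2*Q)*d0)"
    unfolding r1 using r0 by algebra
  also have "\<dots> = P*f2" unfolding e1 e2 rs by algebra
  finally show ?thesis .
qed
lemma main_aux_abs:
  fixes D :: "complex \<Rightarrow> complex \<Rightarrow> nat \<Rightarrow> complex" and q :: complex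
  assumes D0: "\<And>a b. D a b 0 = 1" and D1: "\<And>a b. D a b (Suc 0) = 1 + a*q + b*q"
  and Drec: "\<And>a b n. D a b (Suc (Suc n)) =
   (1 + (a+b)*q^(n+2)) * D a b (Suc n) + a*b*q^(n+2)*(1 - q^(n+1)) * D a b n"
  shows "D a b (Suc n) + a*b*q^(n+2)*D a b n = (1+a*q)*(1+b*q)*D (a*q) (b*q) n
   \<and> D a b (Suc (Suc n)) + a*b*q^(n+3)*D a b (Suc n) = (1+a*q)*(1+b*q)*D (a*q) (b*q) (Suc n)"
proof (induction n)
  case 0
  have d2: "D a b (Suc (Suc 0)) = (1 + (a+b)*q^2) * (1 + a*q + b*q) + a*b*q^2*(1 - q)"
    using Drec[of a b 0] by (simp add: D0 D1 power2_eq_square)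
  have c1: "D a b (Suc 0) + a*b*q^(0+2)*D a b 0 = (1+a*q)*(1+b*q)*D (a*q) (b*q) 0"
    by (simp add: D0 D1 power2_eq_square) algebra
  have c2: "D a b (Suc (Suc 0)) + a*b*q^(0+3)*D a b (Suc 0) = (1+a*q)*(1+b*q)*D (a*q) (b*q) (Suc 0)"
    by (simp add: d2 D1) algebra
  show ?case using c1 c2 by blast
next
  case (Suc n)
  let ?P = "(1+a*q)*(1+b*q)"
  let ?Q = "q^n"
  have p1: "q^(n+1) = q*?Q" "q^(n+2) = q^2*?Q" "q^(n+3) = q^3*?Q" "q^(Suc n+1) = q^2*?Q"
     "q^(Suc n+2) = q^3*?Q" "q^(Suc n+3) = q^4*?Q"
    by (simp_all add: power_add mult.commute power2_eq_square power3_eq_cube)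
  have e1: "D a b (Suc n) + a*b*(q^2*?Q)*D a b n = ?P*D (a*q) (b*q) n" using Suc
    by (simp only: p1)
  have e2: "D a b (Suc (Suc n)) + a*b*(q^3*?Q)*D a b (Suc n) = ?P*D (a*q) (b*q) (Suc n)"
    using Suc by (simp only: p1)
  have r1: "D a b (Suc (Suc (Suc n))) = (1+(a+b)*(q^3*?Q))*D a b (Suc (Suc n)) + a*b*(q^3*?Q)*(1-q^2*?Q)*D a b (Suc n)"
    using Drec[of a b "Suc n"] by (simp only: p1)
  have r0: "D a b (Suc (Suc n)) = (1+(a+b)*(q^2*?Q))*D a b (Suc n) + a*b*(q^2*?Q)*(1-q*?Q)*D a b n"
    using Drec[of a b n] by (simp only: p1)
  have rs: "D (a*q) (b*q) (Suc (Suc n)) = (1+(a*q+b*q)*(q^2*?Q))*D (a*q) (b*q) (Suc n) + (a*q)*(b*q)*(q^2*?Q)*(1-q*?Q)*D (a*q) (b*q) n"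
    using Drec[of "a*q" "b*q" n] by (simp only: p1)
  have "D a b (Suc (Suc (Suc n))) + a*b*(q^4*?Q)*D a b (Suc (Suc n)) = ?P*D (a*q) (b*q) (Suc (Suc n))"
    by (rule alg_step[OF r1 r0 e1 e2 rs])
  then show ?case using e2 by (simp only: p1 Suc_eq_plus1[symmetric])
qed
locale qsys =
  fixes D :: "complex \<Rightarrow> complex \<Rightarrow> nat \<Rightarrow> complex" and q :: complex
  assumes q1: "norm q < 1"
  and D0: "\<And>a b. D a b 0 = 1" and D1: "\<And>a b. D a b (Suc 0) = 1 + a*q + b*q"
  and Drec: "\<And>a b n. D a b (Suc (Suc n)) =
   (1 + (a+b)*q^(n+2)) * D a b (Suc n) + a*b*q^(n+2)*(1 - q^(n+1)) * D a b n"
begin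

abbreviation r where "r \<equiv> norm q"
definition cc :: "complex \<Rightarrow> complex \<Rightarrow> real" where "cc a b = norm a + norm b + 2*norm a*norm b"
definition KK :: "complex \<Rightarrow> complex \<Rightarrow> real" where "KK a b = exp (cc a b / (1 - r))"
definition BB :: "complex \<Rightarrow> complex \<Rightarrow> nat \<Rightarrow> real" where "BB a b n = exp (cc a b * (\<Sum>i\<in>{1..n}. r^i))"

lemma cc_nonneg: "cc a b \<ge> 0" by (simp add: cc_def)

lemma BB_mono: "BB a b n \<le> BB a b (Suc n)"
proof -
  have "(\<Sum>i\<in>{1..n}. r^i) \<le> (\<Sum>i\<in>{1..Suc n}. r^i)"
    by (rule sum_mono2) auto
  then show ?thesis unfolding BB_def using cc_nonneg by (simp add: mult_left_mono)
qed

lemma BB_Suc: "BB a b (Suc n) = BB a b n * exp (cc a b * r^Suc n)"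
  unfolding BB_def by (simp add: distrib_left exp_add)

lemma norm_1mq: "norm (1 - q^k) \<le> 2"
proof -
  have "norm (1 - q^k) \<le> 1 + norm (q^k)" using norm_triangle_ineq4[of 1 "q^k"] by simp
  also have "norm (q^k) \<le> 1" using q1 by (simp add: norm_power power_le_one)
  finally show ?thesis by simp
qed

lemma bound_step:
  assumes h0: "norm (D a b n) \<le> BB a b n" and h1: "norm (D a b (Suc n)) \<le> BB a b (Suc n)"
  shows "norm (D a b (Suc (Suc n))) \<le> BB a b (Suc (Suc n))"
proof -
  let ?t = "r^(n+2)"
  have t0: "?t \<ge> 0" by simp
  have hn: "norm (D a b n) \<le> BB a b (Suc n)" using h0 BB_mono order_trans by blast
  have "norm (D a b (Suc (Suc n))) \<le> norm ((1 + (a+b)*q^(n+2)) * D a b (Suc n)) + norm (a*b*q^(n+2)*(1 - q^(n+1)) * D a b n)"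
    unfolding Drec by (rule norm_triangle_ineq)
  also have "norm ((1 + (a+b)*q^(n+2)) * D a b (Suc n)) \<le> (1 + (norm a + norm b)*?t) * BB a b (Suc n)"
  proof -
    have "norm (1 + (a+b)*q^(n+2)) \<le> 1 + (norm a + norm b)*?t"
    proof -
      have "norm (1 + (a+b)*q^(n+2)) \<le> 1 + norm ((a+b)*q^(n+2))" by (metis norm_one norm_triangle_ineq)
      also have "norm ((a+b)*q^(n+2)) \<le> (norm a + norm b)*?t"
        by (simp add: norm_mult norm_power mult_right_mono norm_triangle_ineq)
      finally show ?thesis by simp
    qed
    then show ?thesis unfolding norm_mult using h1 by (intro mult_mono) auto
  qed
  also have "norm (a*b*q^(n+2)*(1 - q^(n+1)) * D a b n) \<le> (norm a * norm b * ?t * 2) * BB a b (Suc n)"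
    unfolding norm_mult norm_power using norm_1mq[of "n+1", simplified] hn
    by (intro mult_mono) (auto intro!: mult_nonneg_nonneg)
  also have "(1 + (norm a + norm b)*?t) * BB a b (Suc n) + (norm a * norm b * ?t * 2) * BB a b (Suc n)
      = (1 + cc a b * ?t) * BB a b (Suc n)" by (simp add: cc_def algebra_simps)
  also have "\<dots> \<le> exp (cc a b * ?t) * BB a b (Suc n)"
    by (rule mult_right_mono) (auto simp: BB_def)
  also have "\<dots> = BB a b (Suc (Suc n))" by (simp add: BB_Suc)
  finally show ?thesis by simp
qed

lemma bound_BB: "norm (D a b n) \<le> BB a b n \<and> norm (D a b (Suc n)) \<le> BB a b (Suc n)"
proof (induction n)
  case 0
  have "norm (D a b (Suc 0)) \<le> 1 + (norm a + norm b) * r"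
  proof -
    have "norm (1 + a*q + b*q) \<le> 1 + norm (a*q) + norm (b*q)"
      by (metis add.assoc norm_one norm_triangle_ineq order_trans add_left_mono)
    then show ?thesis by (simp add: D1 norm_mult algebra_simps)
  qed
  also have "\<dots> \<le> 1 + cc a b * r" by (auto simp: cc_def intro!: mult_right_mono)
  also have "\<dots> \<le> BB a b (Suc 0)" by (simp add: BB_def)
  finally show ?case by (simp add: D0 BB_def)
next
  case (Suc n) then show ?case using bound_step by blast
qed

lemma r_lt1: "r < 1" using q1 .

lemma BB_le_KK: "BB a b n \<le> KK a b"
proof -
  have s: "summable (\<lambda>i. r^i)" using r_lt1 by (simp add: summable_geometric)
  have "(\<Sum>i\<in>{1..n}. r^i) \<le> (\<Sum>i. r^i)" by (rule sum_le_suminf[OF s]) auto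
  also have "\<dots> = 1/(1-r)" using suminf_geometric[of r] r_lt1 by simp
  finally have "cc a b * (\<Sum>i\<in>{1..n}. r^i) \<le> cc a b * (1/(1-r))" using cc_nonneg by (rule mult_left_mono)
  then show ?thesis unfolding BB_def KK_def by simp
qed

lemma bound: "norm (D a b n) \<le> KK a b"
  using bound_BB[of a b n] BB_le_KK[of a b n] by linarith

lemma KK_ge1: "KK a b \<ge> 1"
  unfolding KK_def using cc_nonneg r_lt1 by simp

lemma diff_bound: "norm (D a b (Suc n) - D a b n) \<le> cc a b * KK a b * r^Suc n"
proof (cases n)
  case 0
  have "norm (D a b (Suc 0) - D a b 0) = norm (a*q + b*q)" by (simp add: D0 D1)
  also have "\<dots> \<le> (norm a + norm b) * r"
    using norm_triangle_ineq[of "a*q" "b*q"] by (simp add: norm_mult algebra_simps)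
  also have "\<dots> \<le> cc a b * r" by (auto simp: cc_def intro!: mult_right_mono)
  also have "\<dots> \<le> cc a b * KK a b * r"
  proof -
    have "1 * r \<le> KK a b * r" using KK_ge1[of a b] by (intro mult_right_mono) auto
    then show ?thesis using cc_nonneg[of a b] by (simp add: mult_left_mono mult.assoc)
  qed
  finally show ?thesis using 0 by simp
next
  case (Suc m)
  let ?t = "r^(m+2)"
  have e: "D a b (Suc (Suc m)) - D a b (Suc m) = (a+b)*q^(m+2) * D a b (Suc m) + a*b*q^(m+2)*(1 - q^(m+1)) * D a b m"
    by (simp add: Drec algebra_simps)
  have "norm (D a b (Suc (Suc m)) - D a b (Suc m)) \<le> norm ((a+b)*q^(m+2) * D a b (Suc m)) + norm (a*b*q^(m+2)*(1 - q^(m+1)) * D a b m)"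
    unfolding e by (rule norm_triangle_ineq)
  also have "norm ((a+b)*q^(m+2) * D a b (Suc m)) \<le> ((norm a + norm b) * ?t) * KK a b"
    unfolding norm_mult norm_power using bound[of a b "Suc m"]
    by (intro mult_mono) (auto simp: norm_triangle_ineq intro!: mult_right_mono)
  also have "norm (a*b*q^(m+2)*(1 - q^(m+1)) * D a b m) \<le> (norm a * norm b * ?t * 2) * KK a b"
    unfolding norm_mult norm_power using norm_1mq[of "m+1", simplified] bound[of a b m]
    by (intro mult_mono) (auto intro!: mult_nonneg_nonneg)
  also have "((norm a + norm b) * ?t) * KK a b + (norm a * norm b * ?t * 2) * KK a b = cc a b * KK a b * ?t"
    by (simp add: cc_def algebra_simps)
  finally show ?thesis using Suc by (simp add: numeral_eq_Suc)
qed


lemma summable_geom_c: "summable (\<lambda>n. C * r^n)"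
  using r_lt1 by (intro summable_mult summable_geometric) simp

lemma summable_diff: "summable (\<lambda>n. D a b (Suc n) - D a b n)"
proof (rule summable_comparison_test')
  show "summable (\<lambda>n. cc a b * KK a b * r * r^n)" by (rule summable_geom_c)
  show "norm (D a b (Suc n) - D a b n) \<le> cc a b * KK a b * r * r^n" for n
    using diff_bound[of a b n] by (simp add: mult.assoc)
qed

definition LL :: "complex \<Rightarrow> complex \<Rightarrow> complex" where
  "LL a b = 1 + (\<Sum>n. D a b (Suc n) - D a b n)"

lemma D_tendsto: "D a b \<longlonglongrightarrow> LL a b"
proof -
  have "(\<lambda>n. 1 + (\<Sum>i<n. D a b (Suc i) - D a b i)) \<longlonglongrightarrow> LL a b"
    unfolding LL_def by (intro tendsto_add tendsto_const summable_LIMSEQ summable_diff)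
  moreover have "(\<lambda>n. 1 + (\<Sum>i<n. D a b (Suc i) - D a b i)) = D a b"
    by (rule ext) (simp add: sum_lessThan_telescope D0)
  ultimately show ?thesis by simp
qed

lemma LL_bound: "norm (LL a b - 1) \<le> cc a b * KK a b / (1 - r)"
proof -
  have "norm (LL a b - 1) = norm (\<Sum>n. D a b (Suc n) - D a b n)" by (simp add: LL_def)
  also have "\<dots> \<le> (\<Sum>n. cc a b * KK a b * r^n)"
  proof (rule norm_suminf_le)
    show "summable (\<lambda>n. cc a b * KK a b * r^n)" by (rule summable_geom_c)
    fix n
    have "r^Suc n \<le> r^n" using power_decreasing[of n "Suc n" r] r_lt1 by simp
    then have "cc a b * KK a b * r^Suc n \<le> cc a b * KK a b * r^n"
      using cc_nonneg[of a b] KK_ge1[of a b] by (intro mult_left_mono) auto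
    then show "norm (D a b (Suc n) - D a b n) \<le> cc a b * KK a b * r^n"
      using diff_bound[of a b n] by linarith
  qed
  also have "\<dots> = cc a b * KK a b / (1 - r)"
    using suminf_mult[OF summable_geometric[of r]] suminf_geometric[of r] r_lt1 by simp
  finally show ?thesis .
qed

lemma cc_shift: "cc (a*q^m) (b*q^m) \<le> r^m * cc a b"
proof -
  have rm: "r^m \<le> 1" "r^m \<ge> 0" using r_lt1 by (auto simp: power_le_one)
  have "norm a * r^m * (norm b * r^m) \<le> norm a * norm b * r^m"
  proof -
    have "norm a * r^m * (norm b * r^m) = (norm a * norm b * r^m) * r^m" by (simp add: algebra_simps)
    also have "\<dots> \<le> (norm a * norm b * r^m) * 1" using rm by (intro mult_left_mono) auto
    finally show ?thesis by simp
  qed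
  then show ?thesis unfolding cc_def by (simp add: norm_mult norm_power algebra_simps)
qed

lemma KK_shift: "KK (a*q^m) (b*q^m) \<le> KK a b"
proof -
  have "r^m * cc a b \<le> 1 * cc a b" using r_lt1 cc_nonneg[of a b]
    by (intro mult_right_mono) (auto simp: power_le_one)
  then have "cc (a*q^m) (b*q^m) \<le> cc a b" using cc_shift[of a m b] by linarith
  then have "cc (a*q^m) (b*q^m) / (1-r) \<le> cc a b / (1-r)" using r_lt1 by (intro divide_right_mono) auto
  then show ?thesis unfolding KK_def by simp
qed

lemma LL_shift_tendsto: "(\<lambda>m. LL (a*q^m) (b*q^m)) \<longlonglongrightarrow> 1"
proof -
  let ?C = "cc a b * KK a b / (1 - r)"
  have "(\<lambda>m. LL (a*q^m) (b*q^m) - 1) \<longlonglongrightarrow> 0"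
  proof (rule Lim_null_comparison)
    show "\<forall>\<^sub>F m in sequentially. norm (LL (a*q^m) (b*q^m) - 1) \<le> r^m * ?C"
    proof (intro always_eventually allI)
      fix m
      have "norm (LL (a*q^m) (b*q^m) - 1) \<le> cc (a*q^m) (b*q^m) * KK (a*q^m) (b*q^m) / (1 - r)"
        by (rule LL_bound)
      also have "\<dots> \<le> (r^m * cc a b) * KK a b / (1 - r)"
        using r_lt1 cc_shift[of a m b] KK_shift[of a m b] cc_nonneg
        by (intro divide_right_mono mult_mono) (auto simp: KK_def)
      finally show "norm (LL (a*q^m) (b*q^m) - 1) \<le> r^m * ?C" by (simp add: algebra_simps)
    qed
    show "(\<lambda>m. r^m * ?C) \<longlonglongrightarrow> 0"
      using r_lt1 by (intro tendsto_mult_left_zero LIMSEQ_power_zero) simp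
  qed
  then show ?thesis by (simp add: LIM_zero_iff)
qed

lemma LL_fun: "LL a b = (1+a*q)*(1+b*q) * LL (a*q) (b*q)"
proof -
  have id: "\<And>n. D a b (Suc n) + a*b*q^(n+2)*D a b n = (1+a*q)*(1+b*q)*D (a*q) (b*q) n"
    using main_aux_abs[of D q, OF D0 D1 Drec] by blast
  have l1: "(\<lambda>n. D a b (Suc n) + a*b*q^(n+2)*D a b n) \<longlonglongrightarrow> LL a b + a*b*0*LL a b"
  proof (intro tendsto_intros)
    show "(\<lambda>n. D a b (Suc n)) \<longlonglongrightarrow> LL a b" using D_tendsto by (rule LIMSEQ_Suc)
    show "D a b \<longlonglongrightarrow> LL a b" by (rule D_tendsto)
    have "(\<lambda>n. q^2 * q^n) \<longlonglongrightarrow> q^2 * 0" using q1 by (intro tendsto_intros) auto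
    moreover have "(\<lambda>n. q^(n+2)) = (\<lambda>n. q^2 * q^n)" by (rule ext) (simp add: power_add mult.commute power2_eq_square)
    ultimately show "(\<lambda>n. q^(n+2)) \<longlonglongrightarrow> 0" by simp
  qed
  have l2: "(\<lambda>n. (1+a*q)*(1+b*q)*D (a*q) (b*q) n) \<longlonglongrightarrow> (1+a*q)*(1+b*q) * LL (a*q) (b*q)"
    by (intro tendsto_intros D_tendsto)
  show ?thesis using LIMSEQ_unique[OF l1] l2 id by simp
qed

lemma LL_iter: "LL a b = (\<Prod>j<m. (1+a*q^Suc j)*(1+b*q^Suc j)) * LL (a*q^m) (b*q^m)"
proof (induction m)
  case 0 then show ?case by simp
next
  case (Suc m)
  have "LL (a*q^m) (b*q^m) = (1+a*q^Suc m)*(1+b*q^Suc m) * LL (a*q^Suc m) (b*q^Suc m)"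
    using LL_fun[of "a*q^m" "b*q^m"] unfolding power_Suc2 mult.assoc .
  then show ?case using Suc by (simp add: mult.assoc)
qed

lemma prod_conv: "convergent_prod (\<lambda>n. 1 + a*q^Suc n)"
proof (intro abs_convergent_prod_imp_convergent_prod summable_imp_abs_convergent_prod)
  have e: "(\<lambda>n. norm (1 + a*q^Suc n - 1)) = (\<lambda>n. (norm a * r) * r^n)"
    by (rule ext) (simp add: norm_mult norm_power mult.assoc)
  show "summable (\<lambda>n. norm (1 + a*q^Suc n - 1))"
    unfolding e by (rule summable_geom_c)
qed

lemma prod_tendsto: "(\<lambda>m. \<Prod>j<m. (1 + a*q^Suc j)) \<longlonglongrightarrow> prodinf (\<lambda>n. 1 + a*q^Suc n)"
  by (rule iffD2[OF LIMSEQ_lessThan_iff_atMost]) (rule convergent_prod_LIMSEQ[OF prod_conv])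

theorem D_limit: "D a b \<longlonglongrightarrow> prodinf (\<lambda>n. 1 + a*q^Suc n) * prodinf (\<lambda>n. 1 + b*q^Suc n)"
proof -
  have t: "(\<lambda>m. (\<Prod>j<m. (1+a*q^Suc j)) * (\<Prod>j<m. (1+b*q^Suc j)) * LL (a*q^m) (b*q^m))
     \<longlonglongrightarrow> prodinf (\<lambda>n. 1 + a*q^Suc n) * prodinf (\<lambda>n. 1 + b*q^Suc n) * 1"
    by (intro tendsto_mult prod_tendsto LL_shift_tendsto)
  have "\<And>m. (\<Prod>j<m. (1+a*q^Suc j)) * (\<Prod>j<m. (1+b*q^Suc j)) * LL (a*q^m) (b*q^m) = LL a b"
    using LL_iter by (simp add: prod.distrib)
  then have "(\<lambda>m. LL a b) \<longlonglongrightarrow> prodinf (\<lambda>n. 1 + a*q^Suc n) * prodinf (\<lambda>n. 1 + b*q^Suc n) * 1"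
    using t by simp
  then have eq: "LL a b = prodinf (\<lambda>n. 1 + a*q^Suc n) * prodinf (\<lambda>n. 1 + b*q^Suc n)"
    using LIMSEQ_unique[OF tendsto_const] by simp
  show ?thesis unfolding eq[symmetric] by (rule D_tendsto)
qed

end

lemma GD0: "G (0, CB) q a b = 1" by (rule G_zero)
lemma GD1: "G (Suc 0, CB) q a b = 1 + a*q + b*q"
  by (simp add: G_CB G_CA G_one_ab G_zero)
lemma rec_alg:
  fixes a b q Q d0 d1 d2 x y :: complex
  assumes "d2 = x + a*(q^2*Q)*y + b*(q^2*Q)*d1" "x = d1 + a*b*(q^2*Q)*d0" "y = d1 - b*(q*Q)*d0"
  shows "d2 = (1+(a+b)*(q^2*Q))*d1 + a*b*(q^2*Q)*(1-q*Q)*d0"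
  using assms by algebra

lemma GDrec: "G (Suc (Suc n), CB) q a b =
   (1 + (a+b)*q^(n+2)) * G (Suc n, CB) q a b + a*b*q^(n+2)*(1 - q^(n+1)) * G (n, CB) q a b"
  for q a b :: complex
proof -
  have p: "q^(n+2) = q^2*q^n" "q^(n+1) = q*q^n" "q^Suc (Suc n) = q^2*q^n" "q^Suc n = q*q^n"
    by (simp_all add: power_add power2_eq_square)
  have h1: "G (Suc (Suc n), CB) q a b = G (Suc (Suc n), AB) q a b + a*(q^2*q^n) * G (Suc n, CA) q a b
     + b*(q^2*q^n) * G (Suc n, CB) q a b"
    unfolding G_CB G_CA p by (simp only: mult.assoc)
  have h2: "G (Suc (Suc n), AB) q a b = G (Suc n, CB) q a b + a*b*(q^2*q^n) * G (n, CB) q a b"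
    unfolding G_AB p by (simp only: mult.assoc)
  have h3: "G (Suc n, CA) q a b = G (Suc n, CB) q a b - b*(q*q^n) * G (n, CB) q a b"
    using G_CB[of n q a b] unfolding p by (simp add: algebra_simps)
  show ?thesis unfolding p by (rule rec_alg[OF h1 h2 h3])
qed

theorem mainTheorem5:
  shows "(\<forall>(k::nat) (q::complex) a b.
            G (k + 2, AB) q a b = (1 + a * q) * (1 + b * q) * G (k, CB) q (a * q) (b * q))
       \<and> (\<forall>(q::complex) a b. norm q < 1 \<longrightarrow>
            (\<lambda>k. G (k, CB) q a b) \<longlonglongrightarrow> qpoch_inf (- a * q) q * qpoch_inf (- b * q) q)"
proof (intro conjI allI impI)
  fix k and q a b :: complex
  have "G (Suc k, CB) q a b + a*b*q^(k+2)*G (k, CB) q a b = (1+a*q)*(1+b*q)*G (k, CB) q (a*q) (b*q)"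
    using main_aux_abs[of "\<lambda>a b n. G (n, CB) q a b" q, OF GD0 GD1 GDrec] by blast
  moreover have "G (k + 2, AB) q a b = G (Suc k, CB) q a b + a*b*q^(k+2)*G (k, CB) q a b"
    using G_AB[of k q a b] by (simp add: numeral_eq_Suc)
  ultimately show "G (k + 2, AB) q a b = (1 + a * q) * (1 + b * q) * G (k, CB) q (a * q) (b * q)"
    by simp
next
  fix q a b :: complex
  assume q: "norm q < 1"
  interpret qsys "\<lambda>a b n. G (n, CB) q a b" q
    by unfold_locales (use q GD0 GD1 GDrec in auto)
  have e: "qpoch_inf (- x * q) q = prodinf (\<lambda>n. 1 + x*q^Suc n)" for x
    unfolding qpoch_inf_def by (rule arg_cong[where f=prodinf]) (rule ext, simp)
  show "(\<lambda>k. G (k, CB) q a b) \<longlonglongrightarrow> qpoch_inf (- a * q) q * qpoch_inf (- b * q) q"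
    unfolding e using D_limit[of a b] by simp
qed

end
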